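(* Fix $\alpha \in (0,1/2)$, $m$, $n$. There is $T_0$ such that for all $T \ge T_0$ and every run of Algorithm 1 in which the small gradient assumption holds, for all $i \in [m]$ and $t \in [T]$: (1) $(w_i^t)^\alpha \ge 4\eta\gamma$ and $w_i^t \ge \frac{1}{10\sqrt{m}} T^{1/(2(\alpha-1))}$; (2) $-32 (w_i^t)^{1-\alpha}\eta\gamma \le w_i^t - w_i^{t+1} \le 2 (w_i^t)^{2-\alpha}(m+1)\eta\gamma$.
   Context: Setting. There are $m$ experts and $n$ outcomes; $\Delta^k$ is the probability simplex in $\mathbb{R}^k$. For reports $\mathbf{p}^1,\dots,\mathbf{p}^m\in\Delta^n$ and $\mathbf{w}\in\Delta^m$, the logarithmic pool is $p^*_j(\mathbf{w}) = \frac{\prod_k (p^k_j)^{w_k}}{\sum_{\ell}\prod_k (p^k_\ell)^{w_k}}$. At each time $t\in[T]$, reports $\mathbf{p}^{t,1},\dots,\mathbf{p}^{t,m}$ and an outcome $j_t$ are revealed, with loss $L^t(\mathbf{w}) := -\ln p^*_{j_t}(\mathbf{w})$ and, by convention, $\partial_i L^t(\mathbf{w}) := \sum_{\ell} p^*_\ell(\mathbf{w}) \ln p^{t,i}_\ell - \ln p^{t,i}_{j_t}$. Algorithm 1 (parameter $\alpha \in (0,1/2)$): $R(\mathbf{w}) = -\frac{1}{\alpha}\sum_i w_i^\alpha$, $\eta = \frac{1}{\sqrt{T}\ln T}\cdot\frac{1}{12 m^{(1+\alpha)/2} n}$, $\mathbf{w}^1 = (1/m,\dots,1/m)$, $\eta_0=+\infty$.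 For $t=1,\dots,T$: if $\eta \le \min_i (w_i^t)^\alpha$ set $\eta_t = \min(\eta_{t-1},\eta)$, else $\eta_t = \min(\eta_{t-1}, \min_i w_i^t)$; then $\mathbf{w}^{t+1}\in\Delta^m$ is defined by $-(w_i^{t+1})^{\alpha-1} = -(w_i^t)^{\alpha-1} - \eta_t\partial_i L^t(\mathbf{w}^t) + c$ for all $i$, with $c$ the unique constant making $\sum_i w_i^{t+1}=1$. Let $\gamma := 12 n \ln T$. The small gradient assumption holds for a run if for every $t\in[T]$ and $i\in[m]$: $-\frac{\gamma}{w_i^t} \le \partial_i L^t(\mathbf{w}^t) \le \gamma$. *)

theory Defs
  imports Complex_Main
begin

text \<open>Vectors are functions nat => real, indexed by 1..k.
  Reports: P t i l = probability assigned by expert i at time t to outcome l. Weights: w t i = weight of expert i at time t.\<close>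

definition in_simplex :: "nat \<Rightarrow> (nat \<Rightarrow> real) \<Rightarrow> bool" where
  "in_simplex k v \<longleftrightarrow> (\<forall>i\<in>{1..k}. 0 \<le> v i) \<and> (\<Sum>i=1..k. v i) = 1"

definition logpool :: "nat \<Rightarrow> nat \<Rightarrow> (nat \<Rightarrow> nat \<Rightarrow> real) \<Rightarrow> (nat \<Rightarrow> real) \<Rightarrow> nat \<Rightarrow> real" where
  "logpool m n p w j =
     (\<Prod>k=1..m. p k j powr w k) / (\<Sum>l=1..n. \<Prod>k=1..m. p k l powr w k)"

definition loss_grad :: "nat \<Rightarrow> nat \<Rightarrow> (nat \<Rightarrow> nat \<Rightarrow> real) \<Rightarrow> nat \<Rightarrow> (nat \<Rightarrow> real) \<Rightarrow> nat \<Rightarrow> real" where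
  "loss_grad m n p j w i =
     (\<Sum>l=1..n. logpool m n p w l * ln (p i l)) - ln (p i j)"

definition alg_eta :: "real \<Rightarrow> nat \<Rightarrow> nat \<Rightarrow> nat \<Rightarrow> real" where
  "alg_eta \<alpha> m n T =
     (1 / (sqrt (real T) * ln (real T))) * (1 / (12 * real m powr ((1 + \<alpha>) / 2) * real n))"

definition alg_gamma :: "nat \<Rightarrow> nat \<Rightarrow> real" where
  "alg_gamma n T = 12 * real n * ln (real T)"

definition eta_cand :: "real \<Rightarrow> nat \<Rightarrow> real \<Rightarrow> (nat \<Rightarrow> nat \<Rightarrow> real) \<Rightarrow> nat \<Rightarrow> real" where
  "eta_cand \<alpha> m \<eta> w s =
     (if \<eta> \<le> Min ((\<lambda>i. w s i powr \<alpha>) ` {1..m}) then \<eta> else Min ((\<lambda>i. w s i) ` {1..m}))"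

text \<open>eta_t = min(eta_{t-1}, cand_t) with eta_0 = +infinity, i.e. the minimum of cand_1..cand_t.\<close>
definition eta_t :: "real \<Rightarrow> nat \<Rightarrow> real \<Rightarrow> (nat \<Rightarrow> nat \<Rightarrow> real) \<Rightarrow> nat \<Rightarrow> real" where
  "eta_t \<alpha> m \<eta> w t = Min ((\<lambda>s. eta_cand \<alpha> m \<eta> w s) ` {1..t})"

definition alg1_run :: "real \<Rightarrow> nat \<Rightarrow> nat \<Rightarrow> nat \<Rightarrow> (nat \<Rightarrow> nat \<Rightarrow> nat \<Rightarrow> real)
    \<Rightarrow> (nat \<Rightarrow> nat) \<Rightarrow> (nat \<Rightarrow> nat \<Rightarrow> real) \<Rightarrow> bool" where
  "alg1_run \<alpha> m n T P J w \<longleftrightarrow>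
     (\<forall>t\<in>{1..T}. \<forall>i\<in>{1..m}. in_simplex n (P t i) \<and> (\<forall>l\<in>{1..n}. 0 < P t i l)) \<and>
     (\<forall>t\<in>{1..T}. J t \<in> {1..n}) \<and>
     (\<forall>i\<in>{1..m}. w 1 i = 1 / real m) \<and>
     (\<forall>t\<in>{1..T}.
        in_simplex m (w (Suc t)) \<and> (\<forall>i\<in>{1..m}. 0 < w (Suc t) i) \<and>
        (\<exists>c. \<forall>i\<in>{1..m}.
           - (w (Suc t) i powr (\<alpha> - 1)) =
             - (w t i powr (\<alpha> - 1))
             - eta_t \<alpha> m (alg_eta \<alpha> m n T) w t * loss_grad m n (P t) (J t) (w t) i + c))"

definition small_gradient :: "nat \<Rightarrow> nat \<Rightarrow> nat \<Rightarrow> (nat \<Rightarrow> nat \<Rightarrow> nat \<Rightarrow> real)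
    \<Rightarrow> (nat \<Rightarrow> nat) \<Rightarrow> (nat \<Rightarrow> nat \<Rightarrow> real) \<Rightarrow> bool" where
  "small_gradient m n T P J w \<longleftrightarrow>
     (\<forall>t\<in>{1..T}. \<forall>i\<in>{1..m}.
        - alg_gamma n T / w t i \<le> loss_grad m n (P t) (J t) (w t) i \<and>
        loss_grad m n (P t) (J t) (w t) i \<le> alg_gamma n T)"

end

theory Submission
  imports Defs "HOL-Analysis.Analysis"
begin


lemma powr_convex_neg:
  assumes "p \<le> (0::real)" shows "convex_on {0<..} (\<lambda>x. x powr p)"
proof (rule f''_ge0_imp_convex[where f'="\<lambda>x. p * x powr (p - 1)" and f''="\<lambda>x. p * ((p-1) * x powr (p - 1 - 1))"])
  show "convex ({0<..}::real set)" by simp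
  fix x :: real assume x: "x \<in> {0<..}"
  show "((\<lambda>x. x powr p) has_real_derivative p * x powr (p - 1)) (at x)"
    using x by (auto intro!: derivative_eq_intros)
  show "((\<lambda>x. p * x powr (p - 1)) has_real_derivative p * ((p-1) * x powr (p - 1 - 1))) (at x)"
    using x by (auto intro!: derivative_eq_intros)
  show "0 \<le> p * ((p-1) * x powr (p - 1 - 1))"
    using assms x by (intro mult_nonpos_nonpos) (auto intro!: mult_nonpos_nonneg)
qed

lemma bern_gen:
  assumes "y > (0::real)" and "convex_on {0<..} (\<lambda>x. x powr p)"
  shows "1 + p * (y - 1) \<le> y powr p"
proof -
  have "(\<lambda>x. x powr p) y - (\<lambda>x. x powr p) 1 \<ge> p * (y - 1)"
  proof (rule convex_on_imp_above_tangent[OF assms(2)])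
    show "connected ({0<..}::real set)" by (simp add: connected_Ioi)
    show "(1::real) \<in> interior {0<..}" by (simp add: interior_open open_greaterThan)
    show "y \<in> {0<..}" using assms by simp
    show "((\<lambda>x. x powr p) has_real_derivative p) (at 1 within {0<..})"
      by (auto intro!: derivative_eq_intros)
  qed
  then show ?thesis by simp
qed

lemma bern_neg: "y > (0::real) \<Longrightarrow> p \<le> 0 \<Longrightarrow> 1 + p * (y - 1) \<le> y powr p"
  using bern_gen powr_convex_neg by blast

lemma bern_pos: "y > (0::real) \<Longrightarrow> p \<ge> 1 \<Longrightarrow> 1 + p * (y - 1) \<le> y powr p"
  using bern_gen powr_convex by blast

lemma F2:
  fixes p x :: real
  assumes "-2 \<le> p" "p \<le> -1" "\<bar>x\<bar> \<le> 1/4"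
  shows "(1+x) powr p \<le> 1 + p*x + 8*x^2"
proof -
  define q where "q = -p"
  have q: "1 \<le> q" "q \<le> 2" using assms by (auto simp: q_def)
  have x: "-1/4 \<le> x" "x \<le> 1/4" using assms by auto
  have b: "1 + q * x \<le> (1+x) powr q" using bern_pos[of "1+x" q] q x by simp
  have pos: "0 < 1 + q * x"
  proof -
    have "q * (-1/4) \<le> q * x" by (rule mult_left_mono) (use q x in auto)
    thus ?thesis using q by linarith
  qed
  have "(1+x) powr p = inverse ((1+x) powr q)" by (simp add: q_def powr_minus)
  also have "\<dots> \<le> inverse (1 + q*x)" using b pos by (intro le_imp_inverse_le) auto
  also have "\<dots> \<le> 1 + p*x + 8*x^2"
  proof -
    have h: "q * (-1/4) \<le> q * x" by (rule mult_left_mono) (use q x in auto)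
    have "x^2 * (8 - q^2 + 8*q*x) \<ge> 0"
    proof (rule mult_nonneg_nonneg)
      show "0 \<le> x^2" by simp
      have "q^2 \<le> 2^2" using q by (intro power_mono) auto
      moreover have "8*q*x = 8*(q*x)" by simp
      moreover have "(2::real)^2 = 4" by simp
      ultimately show "0 \<le> 8 - q^2 + 8*q*x" using h q by linarith
    qed
    hence "1 \<le> (1 + q*x) * (1 - q*x + 8*x^2)" by (simp add: algebra_simps power2_eq_square)
    hence "inverse (1 + q*x) \<le> 1 - q*x + 8*x^2" using pos
      by (simp add: field_simps)
    thus ?thesis by (simp add: q_def)
  qed
  finally show ?thesis .
qed

lemma F3:
  fixes p x :: real
  assumes "-2 \<le> p" "p \<le> 0" "-1/2 \<le> x"
  shows "(1+x) powr p \<le> 1 + 6 * max 0 (-x)"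
proof (cases "x \<ge> 0")
  case True
  have "(1+x) powr p \<le> 1 powr p" using powr_mono2'[of p 1 "1+x"] assms True by simp
  thus ?thesis by simp
next
  case False
  define y where "y = 1 + x"
  have y: "1/2 \<le> y" "y \<le> 1" using False assms by (auto simp: y_def)
  have "y powr p \<le> y powr (-2)" using powr_mono'[of "-2" p y] assms y by simp
  also have "\<dots> = inverse (y^2)" using y by (simp add: powr_minus powr_numeral)
  also have "\<dots> \<le> 7 - 6*y"
  proof -
    have "0 \<le> (1-y)*(2*y-1)*(3*y+1)" using y by (intro mult_nonneg_nonneg) auto
    hence "1 \<le> y^2 * (7 - 6*y)" by (simp add: algebra_simps power2_eq_square)
    thus ?thesis using y by (simp add: field_simps)
  qed
  finally show ?thesis using False by (simp add: y_def)
qed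

lemma chebyshev_sum:
  fixes f g :: "'a \<Rightarrow> real"
  assumes "finite I" and "\<And>i j. i \<in> I \<Longrightarrow> j \<in> I \<Longrightarrow> 0 \<le> (f i - f j) * (g i - g j)"
  shows "sum f I * sum g I \<le> card I * sum (\<lambda>i. f i * g i) I"
proof -
  let ?S = "sum (\<lambda>i. f i * g i) I"
  have "0 \<le> (\<Sum>i\<in>I. \<Sum>j\<in>I. (f i - f j) * (g i - g j))"
    using assms by (intro sum_nonneg) auto
  also have "\<dots> = (\<Sum>i\<in>I. \<Sum>j\<in>I. (f i * g i + f j * g j) - (f i * g j + f j * g i))"
    by (intro sum.cong refl) (simp add: algebra_simps)
  also have "\<dots> = (\<Sum>i\<in>I. \<Sum>j\<in>I. f i * g i + f j * g j) - (\<Sum>i\<in>I. \<Sum>j\<in>I. f i * g j + f j * g i)"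
    by (simp only: sum_subtractf)
  also have "(\<Sum>i\<in>I. \<Sum>j\<in>I. f i * g i + f j * g j) = 2 * (card I * ?S)"
  proof -
    have "(\<Sum>i\<in>I. \<Sum>j\<in>I. f i * g i + f j * g j) = (\<Sum>i\<in>I. card I * (f i * g i) + ?S)"
      by (simp add: sum.distrib)
    also have "\<dots> = card I * ?S + card I * ?S"
      by (simp add: sum.distrib sum_distrib_left)
    finally show ?thesis by simp
  qed
  also have "(\<Sum>i\<in>I. \<Sum>j\<in>I. f i * g j + f j * g i) = 2 * (sum f I * sum g I)"
  proof -
    have "(\<Sum>i\<in>I. \<Sum>j\<in>I. f i * g j + f j * g i) = (\<Sum>i\<in>I. f i * sum g I + g i * sum f I)"
      by (simp only: sum.distrib sum_distrib_left) (simp add: mult.commute)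
    also have "\<dots> = sum f I * sum g I + sum g I * sum f I"
      by (simp only: sum.distrib sum_distrib_right)
    finally show ?thesis by simp
  qed
  finally show ?thesis by simp
qed


lemma rep:
  fixes \<alpha> w w' d :: real
  assumes "\<alpha> < 1" "0 < w" "0 < w'" "w' powr (\<alpha>-1) = w powr (\<alpha>-1) + d"
  shows "0 < 1 + d * w powr (1-\<alpha>) \<and> w' = w * (1 + d * w powr (1-\<alpha>)) powr (1/(\<alpha>-1))"
proof -
  define x where "x = d * w powr (1-\<alpha>)"
  have one: "w powr (\<alpha>-1) * w powr (1-\<alpha>) = 1"
    using assms by (simp add: powr_add[symmetric])
  have e: "w' powr (\<alpha>-1) = w powr (\<alpha>-1) * (1+x)"
    using assms(4) one by (simp add: x_def algebra_simps)
  have wp: "0 < w powr (\<alpha>-1)" using assms by simp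
  have "0 < w' powr (\<alpha>-1)" using assms(3) by simp
  hence "0 < w powr (\<alpha>-1) * (1+x)" using e by simp
  hence xp: "0 < 1 + x" using wp by (simp add: zero_less_mult_iff)
  have "w' = (w' powr (\<alpha>-1)) powr (1/(\<alpha>-1))"
    using assms(1,3) by (simp add: powr_powr)
  also have "\<dots> = (w powr (\<alpha>-1)) powr (1/(\<alpha>-1)) * (1+x) powr (1/(\<alpha>-1))"
    using e wp xp by (simp add: powr_mult)
  also have "(w powr (\<alpha>-1)) powr (1/(\<alpha>-1)) = w"
    using assms(1,2) by (simp add: powr_powr)
  finally show ?thesis using xp by (simp add: x_def)
qed


lemma mulpowr: "0 < (x::real) \<Longrightarrow> x * x powr a = x powr (1 + a)"
  by (simp add: powr_add)

lemma p_bounds: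
  fixes \<alpha> :: real assumes "0 < \<alpha>" "\<alpha> < 1/2"
  shows "-2 \<le> 1/(\<alpha>-1)" "1/(\<alpha>-1) \<le> -1"
  using assms by (auto simp: field_simps)

lemma step_c:
  fixes \<alpha> E c :: real and m :: nat and w w' a :: "nat \<Rightarrow> real"
  assumes \<alpha>: "0<\<alpha>" "\<alpha><1/2" and m: "1 \<le> m"
  and wpos: "\<And>i. i\<in>{1..m} \<Longrightarrow> 0 < w i" and wsum: "sum w {1..m} = 1"
  and w'pos: "\<And>i. i\<in>{1..m} \<Longrightarrow> 0 < w' i" and w'sum: "sum w' {1..m} = 1"
  and upd: "\<And>i. i\<in>{1..m} \<Longrightarrow> w' i powr (\<alpha>-1) = w i powr (\<alpha>-1) + (a i - c)"
  and alo: "\<And>i. i\<in>{1..m} \<Longrightarrow> -E / w i \<le> a i" and ahi: "\<And>i. i\<in>{1..m} \<Longrightarrow> a i \<le> E"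
  and big: "\<And>i. i\<in>{1..m} \<Longrightarrow> 4*E \<le> w i powr \<alpha>" and Epos: "0 < E"
  and Esm1: "8 * m^2 * ((m + (1-2*\<alpha>))^2+1) * E \<le> 1-2*\<alpha>"
  and Esm2: "4*(m + (1-2*\<alpha>))*E \<le> 1"
  shows "-(m + (1-2*\<alpha>))*E \<le> c \<and> c \<le> E"
proof -
  define K where "K = m + (1-2*\<alpha>)"
  define p where "p = 1/(\<alpha>-1)"
  have p: "-2 \<le> p" "p \<le> -1" using p_bounds[OF \<alpha>] by (auto simp: p_def)
  have Kpos: "0 \<le> K" using \<alpha> by (simp add: K_def)
  have w1: "w i \<le> 1" if "i \<in> {1..m}" for i
  proof -
    have "w i \<le> sum w {1..m}" using that wpos by (intro member_le_sum) (auto intro: less_imp_le)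
    thus ?thesis using wsum by simp
  qed
  have ne: "{1..m} \<noteq> {}" using m by auto
  have cub: "c \<le> E"
  proof -
    have "\<exists>i\<in>{1..m}. w' i \<le> w i"
    proof (rule ccontr)
      assume "\<not> ?thesis"
      hence "\<And>i. i\<in>{1..m} \<Longrightarrow> w i < w' i" by (auto simp: not_le)
      hence "sum w {1..m} < sum w' {1..m}" using ne by (intro sum_strict_mono) auto
      thus False using wsum w'sum by simp
    qed
    then obtain i where i: "i \<in> {1..m}" "w' i \<le> w i" by blast
    have "w i powr (\<alpha>-1) \<le> w' i powr (\<alpha>-1)"
      using powr_mono2'[of "\<alpha>-1" "w' i" "w i"] \<alpha> i w'pos by auto
    hence "c \<le> a i" using upd[OF i(1)] by simp
    thus ?thesis using ahi[OF i(1)] by simp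
  qed
  have clb: "-K*E \<le> c"
  proof (rule ccontr)
    assume "\<not> -K*E \<le> c"
    hence cK: "c < -K*E" by simp
    define x0 where "x0 i = E*(K*w i - 1) * w i powr (-\<alpha>)" for i
    define S1 where "S1 = (\<Sum>i\<in>{1..m}. w i powr (1-\<alpha>))"
    define S2 where "S2 = (\<Sum>i\<in>{1..m}. w i powr (2-\<alpha>))"
    have key: "w' i < w i + p * (w i * x0 i) + 8 * (w i * (x0 i)^2)" if i: "i \<in> {1..m}" for i
    proof -
      have wi: "0 < w i" "w i \<le> 1" using wpos[OF i] w1[OF i] by auto
      define x where "x = (a i - c) * w i powr (1-\<alpha>)"
      have r: "0 < 1 + x \<and> w' i = w i * (1 + x) powr p"
        using rep[of \<alpha> "w i" "w' i" "a i - c"] \<alpha> wi w'pos[OF i] upd[OF i] by (simp add: x_def p_def)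
      have wsplit: "w i powr (1-\<alpha>) = w i * w i powr (-\<alpha>)"
        using mulpowr[of "w i" "-\<alpha>"] wi by simp
      have wna: "0 < w i powr (-\<alpha>)" using wi by simp
      have "(K*E - E / w i) < a i - c" using alo[OF i] cK by simp
      hence "(K*E - E / w i) * w i < (a i - c) * w i" using wi(1) by (rule mult_strict_right_mono)
      hence "(K*E - E / w i) * w i * w i powr (-\<alpha>) < (a i - c) * w i * w i powr (-\<alpha>)"
        using wna by (rule mult_strict_right_mono)
      moreover have "(K*E - E / w i) * w i = E*(K*w i - 1)" using wi by (simp add: field_simps)
      ultimately have xx: "x0 i < x" by (simp add: x0_def x_def wsplit mult.assoc)
      have ea: "E * w i powr (-\<alpha>) \<le> 1/4"
      proof -
        have "4*E * w i powr (-\<alpha>) \<le> w i powr \<alpha> * w i powr (-\<alpha>)"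
          by (rule mult_right_mono[OF big[OF i]]) (use wna in auto)
        also have "w i powr \<alpha> * w i powr (-\<alpha>) = 1" using wi by (simp add: powr_add[symmetric])
        finally show ?thesis by simp
      qed
      have x0lo: "-1/4 \<le> x0 i"
      proof -
        have "-E \<le> E*(K*w i - 1)" using Kpos wi Epos by (simp add: algebra_simps)
        hence "-E * w i powr (-\<alpha>) \<le> E*(K*w i - 1) * w i powr (-\<alpha>)"
          using wna by (intro mult_right_mono) auto
        thus ?thesis using ea by (simp add: x0_def)
      qed
      have x0hi: "x0 i \<le> 1/4"
      proof -
        have "x0 i \<le> E*(K*w i) * w i powr (-\<alpha>)"
          unfolding x0_def using wna Epos by (intro mult_right_mono) (auto simp: algebra_simps)
        also have "\<dots> = E*K*w i powr (1-\<alpha>)" by (simp add: wsplit)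
        also have "\<dots> \<le> E*K*1"
          using wi Epos Kpos \<alpha> by (intro mult_left_mono powr_le1) auto
        finally show ?thesis using Esm2 unfolding K_def by (simp add: algebra_simps)
      qed
      have "(1 + x) powr p < (1 + x0 i) powr p"
        using powr_less_mono2_neg[of p "1 + x0 i" "1 + x"] p x0lo xx by auto
      also have "\<dots> \<le> 1 + p * x0 i + 8 * (x0 i)^2"
        using F2[of p "x0 i"] p x0lo x0hi by auto
      finally have "w i * (1 + x) powr p < w i * (1 + p * x0 i + 8 * (x0 i)^2)"
        using wi by simp
      thus ?thesis using r by (simp add: algebra_simps)
    qed
    have "sum w' {1..m} < (\<Sum>i\<in>{1..m}. w i + p * (w i * x0 i) + 8 * (w i * (x0 i)^2))"
      using ne key by (intro sum_strict_mono) auto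
    also have "\<dots> = 1 + p * (\<Sum>i\<in>{1..m}. w i * x0 i) + 8 * (\<Sum>i\<in>{1..m}. w i * (x0 i)^2)"
      using wsum by (simp add: sum.distrib sum_distrib_left)
    finally have contra: "0 < p * (\<Sum>i\<in>{1..m}. w i * x0 i) + 8 * (\<Sum>i\<in>{1..m}. w i * (x0 i)^2)"
      using w'sum by simp
    have wx0: "w i * x0 i = E * (K * w i powr (2-\<alpha>) - w i powr (1-\<alpha>))" if i: "i \<in> {1..m}" for i
    proof -
      have wi: "0 < w i" using wpos[OF i] by auto
      have a1: "w i * w i powr (-\<alpha>) = w i powr (1-\<alpha>)"
        using mulpowr[of "w i" "-\<alpha>"] wi by simp
      have a2: "w i * (w i * w i powr (-\<alpha>)) = w i powr (2-\<alpha>)"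
        using mulpowr[of "w i" "1-\<alpha>"] wi by (simp add: a1)
      show ?thesis unfolding x0_def using a1 a2 by (simp add: algebra_simps)
    qed
    have sumwx0: "(\<Sum>i\<in>{1..m}. w i * x0 i) = E * (K * S2 - S1)"
    proof -
      have "(\<Sum>i\<in>{1..m}. w i * x0 i) = (\<Sum>i\<in>{1..m}. E * (K * w i powr (2-\<alpha>) - w i powr (1-\<alpha>)))"
        using wx0 by (rule sum.cong[OF refl])
      also have "\<dots> = E * (K * S2 - S1)"
        by (simp add: S1_def S2_def sum_subtractf sum_distrib_left[symmetric])
      finally show ?thesis .
    qed
    have cheb: "S1 * sum w {1..m} \<le> m * S2"
    proof -
      have "S1 * sum w {1..m} \<le> card {1..m} * (\<Sum>i\<in>{1..m}. w i powr (1-\<alpha>) * w i)"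
        unfolding S1_def
      proof (rule chebyshev_sum)
        fix i j assume i: "i \<in> {1..m}" and j: "j \<in> {1..m}"
        have wi: "0 < w i" "0 < w j" using wpos i j by auto
        show "0 \<le> (w i powr (1-\<alpha>) - w j powr (1-\<alpha>)) * (w i - w j)"
        proof (cases "w i \<le> w j")
          case True
          hence "w i powr (1-\<alpha>) \<le> w j powr (1-\<alpha>)" using wi \<alpha> by (intro powr_mono2) auto
          thus ?thesis using True by (intro mult_nonpos_nonpos) auto
        next
          case False
          hence "w j powr (1-\<alpha>) \<le> w i powr (1-\<alpha>)" using wi \<alpha> by (intro powr_mono2) auto
          thus ?thesis using False by (intro mult_nonneg_nonneg) auto
        qed
      qed simp
      also have "(\<Sum>i\<in>{1..m}. w i powr (1-\<alpha>) * w i) = S2"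
        unfolding S2_def
      proof (rule sum.cong)
        fix i assume i: "i \<in> {1..m}"
        have wi: "0 < w i" using wpos i by auto
        show "w i powr (1-\<alpha>) * w i = w i powr (2-\<alpha>)"
          using mulpowr[of "w i" "1-\<alpha>"] wi by (simp add: mult.commute)
      qed simp
      finally show ?thesis by simp
    qed
    have S1ge: "1 \<le> S1"
    proof -
      have "sum w {1..m} \<le> S1" unfolding S1_def
      proof (rule sum_mono)
        fix i assume i: "i \<in> {1..m}"
        have wi: "0 < w i" "w i \<le> 1" using wpos i w1 i by auto
        have "w i powr 1 \<le> w i powr (1-\<alpha>)" using powr_mono'[of "1-\<alpha>" 1 "w i"] wi \<alpha> by auto
        thus "w i \<le> w i powr (1-\<alpha>)" using wi by simp
      qed
      thus ?thesis using wsum by simp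
    qed
    have S1m: "S1 \<le> m * S2" using cheb wsum by simp
    have S2m: "1 \<le> m * S2" using S1ge S1m by simp
    have mpos: "0 < real m" using m by simp
    have A: "(1-2*\<alpha>) / m \<le> K * S2 - S1"
    proof -
      have "K * S2 - S1 \<ge> K * S2 - m * S2" using S1m by simp
      also have "K * S2 - m * S2 = (1-2*\<alpha>) * S2" by (simp add: K_def algebra_simps)
      finally have "(1-2*\<alpha>) * S2 \<le> K * S2 - S1" .
      moreover have "(1-2*\<alpha>) / m \<le> (1-2*\<alpha>) * S2"
      proof -
        have "(1-2*\<alpha>)*1 \<le> (1-2*\<alpha>)*(m*S2)" by (rule mult_left_mono) (use S2m \<alpha> in auto)
        hence "(1-2*\<alpha>)*1 / m \<le> (1-2*\<alpha>)*(m*S2) / m" using mpos by (intro divide_right_mono) auto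
        thus ?thesis using mpos by simp
      qed
      ultimately show ?thesis by linarith
    qed
    have B: "(\<Sum>i\<in>{1..m}. w i * (x0 i)^2) \<le> m * (E^2 * (K^2+1))"
    proof -
      have "(\<Sum>i\<in>{1..m}. w i * (x0 i)^2) \<le> (\<Sum>i\<in>{1..m}. E^2 * (K^2+1))"
      proof (rule sum_mono)
        fix i assume i: "i \<in> {1..m}"
        have wi: "0 < w i" "w i \<le> 1" using wpos i w1 i by auto
        have e1: "w i * (x0 i)^2 = E^2 * (K * w i - 1)^2 * w i powr (1 - 2*\<alpha>)"
        proof -
          have h1: "(w i powr (-\<alpha>))^2 = w i powr (-2*\<alpha>)"
            using powr_add[of "w i" "-\<alpha>" "-\<alpha>"] by (simp add: power2_eq_square)
          have h2: "w i * w i powr (-2*\<alpha>) = w i powr (1-2*\<alpha>)"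
            using mulpowr[of "w i" "-2*\<alpha>"] wi by simp
          have q: "(x0 i)^2 = E^2 * (K*w i - 1)^2 * w i powr (-2*\<alpha>)"
            unfolding x0_def power_mult_distrib h1 ..
          show ?thesis unfolding q h2[symmetric] by (simp add: ac_simps)
        qed
        have e2: "(K * w i - 1)^2 \<le> K^2 + 1"
        proof -
          have "K * w i \<le> K" using Kpos wi by (simp add: mult_left_le)
          hence "(K * w i)^2 \<le> K^2" using Kpos wi by (intro power_mono) auto
          moreover have "0 \<le> K * w i" using Kpos wi by simp
          ultimately show ?thesis by (simp add: power2_diff)
        qed
        have e3: "w i powr (1 - 2*\<alpha>) \<le> 1" using wi \<alpha> by (intro powr_le1) auto
        have "(K * w i - 1)^2 * w i powr (1 - 2*\<alpha>) \<le> (K^2 + 1) * 1"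
          using e2 e3 by (intro mult_mono) auto
        thus "w i * (x0 i)^2 \<le> E^2 * (K^2+1)" unfolding e1
          using mult_left_mono[of _ _ "E^2"] by (simp add: mult.assoc)
      qed
      thus ?thesis by simp
    qed
    have C: "p * (\<Sum>i\<in>{1..m}. w i * x0 i) \<le> - (E * ((1-2*\<alpha>) / m))"
    proof -
      have s0: "E * ((1-2*\<alpha>) / m) \<le> (\<Sum>i\<in>{1..m}. w i * x0 i)"
        unfolding sumwx0 using A Epos by (intro mult_left_mono) auto
      have "0 \<le> E * ((1-2*\<alpha>) / m)" using Epos \<alpha> mpos by simp
      hence "p * (\<Sum>i\<in>{1..m}. w i * x0 i) \<le> -1 * (\<Sum>i\<in>{1..m}. w i * x0 i)"
        using s0 p by (intro mult_right_mono) auto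
      thus ?thesis using s0 by simp
    qed
    have D: "8 * (m * (E^2 * (K^2+1))) \<le> E * ((1-2*\<alpha>) / m)"
    proof -
      have "8 * m^2 * (K^2+1) * E * E \<le> (1-2*\<alpha>) * E"
        using Esm1 Epos unfolding K_def by (intro mult_right_mono) auto
      thus ?thesis using mpos by (simp add: field_simps power2_eq_square)
    qed
    show False using contra B C D by linarith
  qed
  show ?thesis using cub clb by (simp add: K_def)
qed


lemma step_i:
  fixes \<alpha> E c a w w' :: real and m :: nat
  assumes \<alpha>: "0<\<alpha>" "\<alpha><1/2"
  and wi: "0 < w" "w \<le> 1" and w'p: "0 < w'"
  and upd: "w' powr (\<alpha>-1) = w powr (\<alpha>-1) + (a - c)"
  and alo: "-E / w \<le> a" and ahi: "a \<le> E"
  and big: "4*E \<le> w powr \<alpha>" and Epos: "0 < E"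
  and clo: "-(m + (1-2*\<alpha>))*E \<le> c" and chi: "c \<le> E"
  shows "-32 * w powr (1-\<alpha>) * E \<le> w - w'"
    and "w - w' \<le> 2 * w powr (2-\<alpha>) * (m+1) * E"
    and "w' powr (\<alpha>-1) \<le> w powr (\<alpha>-1) + (1 + (m + (1-2*\<alpha>)))*E"
proof -
  define K where "K = m + (1-2*\<alpha>)"
  define p where "p = 1/(\<alpha>-1)"
  have p: "-2 \<le> p" "p \<le> -1" using p_bounds[OF \<alpha>] by (auto simp: p_def)
  define d where "d = a - c"
  define x where "x = d * w powr (1-\<alpha>)"
  have r: "0 < 1 + x \<and> w' = w * (1 + x) powr p"
    using rep[of \<alpha> w w' d] \<alpha> wi w'p upd by (simp add: x_def p_def d_def)
  have wsplit: "w powr (1-\<alpha>) = w * w powr (-\<alpha>)"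
    using mulpowr[of w "-\<alpha>"] wi by simp
  have w2: "w * w powr (1-\<alpha>) = w powr (2-\<alpha>)"
    using mulpowr[of w "1-\<alpha>"] wi by simp
  have wna: "0 < w powr (-\<alpha>)" using wi by simp
  have dhi: "d \<le> (1+K)*E" using ahi clo by (simp add: d_def K_def algebra_simps)
  show "w' powr (\<alpha>-1) \<le> w powr (\<alpha>-1) + (1 + (m + (1-2*\<alpha>)))*E"
    using upd dhi by (simp add: d_def K_def)
  show "w - w' \<le> 2 * w powr (2-\<alpha>) * (m+1) * E"
  proof -
    have "1 + p * x \<le> (1 + x) powr p" using bern_neg[of "1+x" p] r p by simp
    hence "w * (1 + p * x) \<le> w'" using r wi by (simp add: mult_left_mono)
    hence "w - w' \<le> (-p) * d * (w * w powr (1-\<alpha>))" by (simp add: x_def algebra_simps)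
    also have "\<dots> = (-p) * d * w powr (2-\<alpha>)" by (simp add: w2)
    also have "\<dots> \<le> (-p) * ((1+K)*E) * w powr (2-\<alpha>)"
      using dhi p wi by (intro mult_right_mono mult_left_mono) auto
    also have "\<dots> \<le> 2 * (m+1) * E * w powr (2-\<alpha>)"
    proof (rule mult_right_mono)
      have "(1+K) \<le> 2*(m+1)*(1-\<alpha>)"
      proof -
        have "0 \<le> real m * (1 - 2*\<alpha>)" using \<alpha> by simp
        thus ?thesis by (simp add: K_def algebra_simps)
      qed
      hence "(1+K) / (1-\<alpha>) \<le> 2*(m+1)" using \<alpha> by (simp add: field_simps)
      moreover have "-p = 1/(1-\<alpha>)" using \<alpha> by (simp add: p_def field_simps)
      ultimately have "(-p) * (1+K) \<le> 2*(m+1)" by simp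
      thus "(-p) * ((1+K)*E) \<le> 2 * (m+1) * E"
        using Epos by (metis mult.assoc mult_right_mono less_imp_le)
    qed (use wi in simp)
    finally show ?thesis by (simp add: algebra_simps)
  qed
  show "-32 * w powr (1-\<alpha>) * E \<le> w - w'"
  proof -
    have ea: "E * w powr (-\<alpha>) \<le> 1/4"
    proof -
      have "4*E * w powr (-\<alpha>) \<le> w powr \<alpha> * w powr (-\<alpha>)"
        by (rule mult_right_mono[OF big]) (use wna in auto)
      also have "w powr \<alpha> * w powr (-\<alpha>) = 1" using wi by (simp add: powr_add[symmetric])
      finally show ?thesis by simp
    qed
    have w1a: "w powr (1-\<alpha>) \<le> w powr (-\<alpha>)"
      using wsplit wi wna by (simp add: mult_left_le_one_le)
    have dlo: "-E / w - E \<le> d" using alo chi by (simp add: d_def)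
    have "(-E / w - E) * w powr (1-\<alpha>) \<le> x"
      unfolding x_def using dlo wi by (intro mult_right_mono) auto
    moreover have "(-E / w - E) * w powr (1-\<alpha>) = -E * w powr (-\<alpha>) - E * w powr (1-\<alpha>)"
      using wi by (simp add: wsplit field_simps)
    moreover have "E * w powr (1-\<alpha>) \<le> E * w powr (-\<alpha>)"
      using w1a Epos by simp
    ultimately have xlo: "-2 * (E * w powr (-\<alpha>)) \<le> x" by linarith
    have "(1 + x) powr p \<le> 1 + 6 * max 0 (-x)"
      using F3[of p x] p xlo ea by auto
    also have "\<dots> \<le> 1 + 12 * (E * w powr (-\<alpha>))"
      using xlo Epos wna by (auto simp: max_def)
    finally have "w' \<le> w * (1 + 12 * (E * w powr (-\<alpha>)))"
      using r wi by (simp add: mult_left_mono)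
    also have "\<dots> = w + 12 * E * w powr (1-\<alpha>)" by (simp add: wsplit algebra_simps)
    finally have "w' - w \<le> 12 * E * w powr (1-\<alpha>)" by simp
    moreover have "0 \<le> E * w powr (1-\<alpha>)" using Epos by simp
    ultimately show ?thesis by (simp add: algebra_simps)
  qed
qed



lemma arith_T:
  fixes \<alpha> T w :: real and m :: nat
  assumes \<alpha>: "0<\<alpha>" "\<alpha><1/2" and m: "1 \<le> m" and T: "1 \<le> T"
  and H1: "40*real m \<le> T" and H2: "4 * sqrt(10 * sqrt (real m)) \<le> T powr (1/2 + 1/(4*(\<alpha>-1)))"
  and w: "0 < w" "w \<le> 1"
  and u: "w powr (\<alpha>-1) \<le> real m powr (1-\<alpha>) + T*(1 + (real m + (1-2*\<alpha>))) * (1/(sqrt T * real m powr ((1+\<alpha>)/2)))"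
  shows "1/(10* sqrt (real m)) * T powr (1/(2*(\<alpha>-1))) \<le> w"
    and "4 * (1/(sqrt T * real m powr ((1+\<alpha>)/2))) \<le> w powr \<alpha>"
proof -
  define s where "s = sqrt T"
  define M where "M = real m powr ((1+\<alpha>)/2)"
  define p where "p = 1/(\<alpha>-1)"
  define K where "K = real m + (1-2*\<alpha>)"
  have p: "-2 \<le> p" "p \<le> -1" using p_bounds[OF \<alpha>] by (auto simp: p_def)
  have mpos: "1 \<le> real m" using m by simp
  have mpos': "0 < real m" using m by simp
  have spos: "0 < s" using T by (simp add: s_def)
  have Ts: "T = s * s" using T by (simp add: s_def)
  have M1: "1 \<le> M" unfolding M_def using mpos \<alpha> by (intro ge_one_powr_ge_zero) auto
  have sqm: "sqrt (real m) = real m powr (1/2)" using mpos by (simp add: powr_half_sqrt)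
  define c1 where "c1 = (10 * sqrt (real m)) powr (1-\<alpha>)"
  have c1pos: "0 < c1" using mpos by (simp add: c1_def)
  have UV: "m powr (1-\<alpha>) + T*(1 + K) * (1/(s * M)) \<le> c1 * s"
  proof -
    have e1: "c1 * M = 10 powr (1-\<alpha>) * m"
    proof -
      have "c1 = 10 powr (1-\<alpha>) * (real m powr (1/2)) powr (1-\<alpha>)"
        unfolding c1_def sqm using mpos by (simp add: powr_mult)
      also have "(real m powr (1/2)) powr (1-\<alpha>) = real m powr ((1-\<alpha>)/2)" by (simp add: powr_powr)
      finally have "c1 * M = 10 powr (1-\<alpha>) * (real m powr ((1-\<alpha>)/2) * real m powr ((1+\<alpha>)/2))"
        by (simp add: M_def)
      also have "m powr ((1-\<alpha>)/2) * real m powr ((1+\<alpha>)/2) = real m powr 1"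
        by (simp add: powr_add[symmetric] add_divide_distrib[symmetric])
      finally show ?thesis using mpos by simp
    qed
    have e2: "m powr (1-\<alpha>) * M \<le> m * sqrt (real m)"
    proof -
      have "m powr (1-\<alpha>) * M = real m powr ((3-\<alpha>)/2)"
        unfolding M_def by (simp add: powr_add[symmetric] field_simps)
      also have "\<dots> \<le> real m powr (1 + 1/2)" using mpos \<alpha> by (intro powr_mono) auto
      also have "\<dots> = m * sqrt (real m)" using mpos' by (metis mulpowr powr_half_sqrt less_imp_le)
      finally show ?thesis .
    qed
    have e3: "3.16 \<le> 10 powr (1-\<alpha>)"
    proof -
      have "10 powr (1/2) \<le> 10 powr (1-\<alpha>)" using \<alpha> by (intro powr_mono) auto
      moreover have "3.16 \<le> sqrt (10::real)" by (rule real_le_rsqrt) (simp add: power2_eq_square)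
      ultimately show ?thesis by (simp add: powr_half_sqrt)
    qed
    have e4: "sqrt (real m) \<le> 0.16 * s"
    proof -
      have "real m \<le> (0.16 * s)^2" using H1 Ts by (simp add: power2_eq_square)
      hence "sqrt (real m) \<le> sqrt ((0.16 * s)^2)" by (rule real_sqrt_le_mono)
      thus ?thesis using spos by simp
    qed
    have TE: "T*(1 + K) * (1/(s * M)) = s * (1+K) / M" using spos M1 by (simp add: Ts field_simps)
    have "(real m powr (1-\<alpha>) + s * (1+K) / M) * M = real m powr (1-\<alpha>) * M + s * (1+K)"
      using M1 by (simp add: field_simps)
    also have "\<dots> \<le> m * sqrt (real m) + s * (3 * m)"
    proof -
      have "1 + K \<le> 3 * m" using mpos \<alpha> by (simp add: K_def)
      hence "s * (1+K) \<le> s * (3*m)" using spos by (intro mult_left_mono) auto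
      thus ?thesis using e2 by linarith
    qed
    also have "\<dots> \<le> m * (0.16 * s) + s * (3 * m)" using e4 mpos by (simp add: mult_left_mono)
    also have "\<dots> = 3.16 * m * s" by (simp add: algebra_simps)
    also have "\<dots> \<le> 10 powr (1-\<alpha>) * m * s" using e3 mpos spos by (simp add: mult_right_mono)
    also have "\<dots> = c1 * s * M" using e1 by (simp add: algebra_simps)
    finally have "(real m powr (1-\<alpha>) + s * (1+K) / M) * M \<le> (c1 * s) * M" by simp
    hence "m powr (1-\<alpha>) + s * (1+K) / M \<le> c1 * s" using M1 by simp
    thus ?thesis using TE by simp
  qed
  have L: "w \<ge> (c1 * s) powr p"
  proof -
    have "w = (w powr (\<alpha>-1)) powr p" using w \<alpha> by (simp add: powr_powr p_def)
    also have "(w powr (\<alpha>-1)) powr p \<ge> (c1 * s) powr p"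
      using powr_mono2'[of p "w powr (\<alpha>-1)" "c1 * s"] p u UV w
      by (simp add: s_def M_def K_def)
    finally show ?thesis by simp
  qed
  have Lval: "(c1 * s) powr p = 1/(10* sqrt (real m)) * T powr (1/(2*(\<alpha>-1)))"
  proof -
    have "(c1 * s) powr p = c1 powr p * s powr p" using c1pos spos by (simp add: powr_mult)
    also have "c1 powr p = (10 * sqrt (real m)) powr ((1-\<alpha>) * p)" by (simp add: c1_def powr_powr)
    also have "(1-\<alpha>) * p = -1" using \<alpha> by (simp add: p_def field_simps)
    also have "s powr p = T powr (1/(2*(\<alpha>-1)))"
    proof -
      have "s = T powr (1/2)" using T by (simp add: s_def powr_half_sqrt)
      hence "s powr p = T powr (1/2 * p)" by (simp add: powr_powr)
      also have "1/2 * p = 1/(2*(\<alpha>-1))" by (simp add: p_def)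
      finally show ?thesis .
    qed
    also have "(10 * sqrt (real m)) powr (-1) = 1/(10 * sqrt (real m))"
      using mpos by (simp add: powr_minus_divide)
    finally show ?thesis .
  qed
  show "1/(10* sqrt (real m)) * T powr (1/(2*(\<alpha>-1))) \<le> w" using L Lval by simp
  show "4 * (1/(sqrt T * real m powr ((1+\<alpha>)/2))) \<le> w powr \<alpha>"
  proof -
    define C where "C = sqrt (10 * sqrt (real m))"
    have Cpos: "0 < C" using mpos by (simp add: C_def)
    have "w powr (1/2) \<le> w powr \<alpha>" using powr_mono'[of \<alpha> "1/2" w] \<alpha> w by simp
    moreover have "((c1 * s) powr p) powr (1/2) \<le> w powr (1/2)"
      using L by (intro powr_mono2) auto
    moreover have "((c1 * s) powr p) powr (1/2) = T powr (p/4) / C"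
    proof -
      have "((c1 * s) powr p) powr (1/2) = (1/(10* sqrt (real m))) powr (1/2) * (T powr (1/(2*(\<alpha>-1)))) powr (1/2)"
        unfolding Lval using mpos T by (intro powr_mult)
      also have "(T powr (1/(2*(\<alpha>-1)))) powr (1/2) = T powr (p/4)" by (simp add: powr_powr p_def mult.commute)
      also have "(1/(10* sqrt (real m))) powr (1/2) = 1 / C"
        using mpos by (simp add: C_def powr_half_sqrt real_sqrt_divide)
      finally show ?thesis by simp
    qed
    moreover have "4 * (1/(sqrt T * real m powr ((1+\<alpha>)/2))) \<le> T powr (p/4) / C"
    proof -
      have "4 * (1/(s * M)) \<le> 4 / s" using spos M1 by (simp add: field_simps)
      also have "4 / s \<le> T powr (p/4) / C"
      proof -
        have "T powr (1/2 + 1/(4*(\<alpha>-1))) = s * T powr (p/4)"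
          using T by (simp add: powr_add s_def powr_half_sqrt p_def mult.commute)
        hence "4 * C \<le> s * T powr (p/4)" using H2 by (simp add: C_def)
        thus ?thesis using spos Cpos by (simp add: field_simps)
      qed
      finally show ?thesis by (simp add: s_def M_def)
    qed
    ultimately show ?thesis by linarith
  qed
qed



theorem corollary1:
  fixes \<alpha> :: real and m n :: nat
  assumes "0 < \<alpha>" and "\<alpha> < 1/2"
  shows "\<exists>T0::nat. \<forall>T\<ge>T0. \<forall>P J w.
    alg1_run \<alpha> m n T P J w \<and> small_gradient m n T P J w \<longrightarrow>
    (\<forall>i\<in>{1..m}. \<forall>t\<in>{1..T}.
       w t i powr \<alpha> \<ge> 4 * alg_eta \<alpha> m n T * alg_gamma n T \<and>
       w t i \<ge> 1 / (10 * sqrt (real m)) * real T powr (1 / (2 * (\<alpha> - 1))) \<and>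
       - 32 * w t i powr (1 - \<alpha>) * alg_eta \<alpha> m n T * alg_gamma n T \<le> w t i - w (Suc t) i \<and>
       w t i - w (Suc t) i \<le> 2 * w t i powr (2 - \<alpha>) * (real m + 1) * alg_eta \<alpha> m n T * alg_gamma n T)"
proof -
  note \<alpha> = assms
  define K where "K = real m + (1 - 2*\<alpha>)"
  define q where "q = 1/2 + 1/(4*(\<alpha>-1))"
  define C where "C = 4 * sqrt (10 * sqrt (real m))"
  have qpos: "0 < q" using \<alpha> by (simp add: q_def field_simps)
  have Kpos: "0 \<le> K" using \<alpha> by (simp add: K_def)
  define X where "X = max (max 3 (40 * real m))
     (max (max ((8 * (real m)^2 * (K^2+1) / (1-2*\<alpha>))^2) ((4*K)^2)) (C powr (1/q)))"
  show ?thesis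
  proof (intro exI[of _ "nat \<lceil>X\<rceil>"] allI impI ballI)
    fix T :: nat and P J w i t
    assume T0: "nat \<lceil>X\<rceil> \<le> T"
    assume runsg: "alg1_run \<alpha> m n T P J w \<and> small_gradient m n T P J w"
    assume i: "i \<in> {1..m}" and t: "t \<in> {1..T}"
    have TX: "X \<le> real T" using T0 by linarith
    have T3: "3 \<le> real T" using TX by (simp add: X_def)
    have H1: "40 * real m \<le> real T" using TX by (simp add: X_def)
    have m1: "1 \<le> m" using i by simp
    have mpos: "0 < real m" using m1 by simp
    have run: "alg1_run \<alpha> m n T P J w" and sg: "small_gradient m n T P J w" using runsg by auto
    have n1: "1 \<le> n"
    proof -
      have "1 \<in> {1..T}" using T3 by simp
      hence "J 1 \<in> {1..n}" using run by (simp add: alg1_run_def)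
      thus ?thesis by simp
    qed
    define s where "s = sqrt (real T)"
    have spos: "0 < s" using T3 by (simp add: s_def)
    have H3: "8 * (real m)^2 * (K^2+1) / (1-2*\<alpha>) \<le> s"
      unfolding s_def by (rule real_le_rsqrt) (use TX in \<open>simp add: X_def\<close>)
    have H4: "4*K \<le> s"
      unfolding s_def by (rule real_le_rsqrt) (use TX in \<open>simp add: X_def\<close>)
    have H2: "C \<le> real T powr q"
    proof -
      have "C powr (1/q) \<le> real T" using TX by (simp add: X_def)
      hence "(C powr (1/q)) powr q \<le> real T powr q" using qpos by (intro powr_mono2) auto
      moreover have "(C powr (1/q)) powr q = C" using qpos mpos by (simp add: powr_powr C_def)
      ultimately show ?thesis by simp
    qed
    define M where "M = real m powr ((1+\<alpha>)/2)"
    have M1: "1 \<le> M" unfolding M_def using m1 \<alpha> by (intro ge_one_powr_ge_zero) auto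
    define E where "E = 1/(sqrt (real T) * real m powr ((1+\<alpha>)/2))"
    define \<eta> where "\<eta> = alg_eta \<alpha> m n T"
    define \<gamma> where "\<gamma> = alg_gamma n T"
    have lnT: "0 < ln (real T)" using T3 by simp
    have Eeq: "\<eta> * \<gamma> = E"
      using lnT n1 mpos spos unfolding \<eta>_def \<gamma>_def E_def alg_eta_def alg_gamma_def
      by (simp add: field_simps s_def)
    have Epos: "0 < E" using spos M1 by (simp add: E_def s_def[symmetric] M_def[symmetric])
    have Ele: "E \<le> 1/s" using spos M1 by (simp add: E_def s_def[symmetric] M_def[symmetric] field_simps)
    have \<eta>nn: "0 \<le> \<eta>" using lnT n1 mpos unfolding \<eta>_def alg_eta_def by simp
    have \<gamma>nn: "0 \<le> \<gamma>" using lnT unfolding \<gamma>_def alg_gamma_def by simp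
    have Esm1: "8 * (real m)^2 * (K^2+1) * E \<le> 1-2*\<alpha>"
    proof -
      have "8 * (real m)^2 * (K^2+1) * E \<le> 8 * (real m)^2 * (K^2+1) * (1/s)"
        using Ele by (intro mult_left_mono) auto
      also have "\<dots> \<le> 1-2*\<alpha>" using H3 spos \<alpha> by (simp add: field_simps)
      finally show ?thesis .
    qed
    have Esm2: "4*K*E \<le> 1"
    proof -
      have "4*K*E \<le> 4*K*(1/s)" using Ele Kpos by (intro mult_left_mono) auto
      also have "\<dots> \<le> 1" using H4 spos by (simp add: field_simps)
      finally show ?thesis .
    qed
    have w1: "w 1 j = 1 / real m" if "j \<in> {1..m}" for j using run that by (simp add: alg1_run_def)
    have R4: "\<And>t. t \<in> {1..T} \<Longrightarrow> in_simplex m (w (Suc t)) \<and> (\<forall>i\<in>{1..m}. 0 < w (Suc t) i) \<and>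
        (\<exists>c. \<forall>i\<in>{1..m}.
           - (w (Suc t) i powr (\<alpha> - 1)) =
             - (w t i powr (\<alpha> - 1))
             - eta_t \<alpha> m \<eta> w t * loss_grad m n (P t) (J t) (w t) i + c)"
      using run unfolding alg1_run_def \<eta>_def by blast
    have wpos: "0 < w t' j" if "t' \<in> {1..Suc T}" "j \<in> {1..m}" for t' j
    proof (cases "t' = 1")
      case True thus ?thesis using w1 that mpos by simp
    next
      case False
      define t'' where "t'' = t' - 1"
      have "t' = Suc t''" "t'' \<in> {1..T}" using False that by (auto simp: t''_def)
      thus ?thesis using R4 that by auto
    qed
    have wsum: "sum (w t') {1..m} = 1" if "t' \<in> {1..Suc T}" for t'
    proof (cases "t' = 1")
      case True
      have "sum (w t') {1..m} = sum (\<lambda>j. 1 / real m) {1..m}" using True w1 by (intro sum.cong) auto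
      thus ?thesis using mpos by simp
    next
      case False
      define t'' where "t'' = t' - 1"
      have "t' = Suc t''" "t'' \<in> {1..T}" using False that by (auto simp: t''_def)
      thus ?thesis using R4 by (auto simp: in_simplex_def)
    qed
    have wle1: "w t' j \<le> 1" if "t' \<in> {1..Suc T}" "j \<in> {1..m}" for t' j
    proof -
      have "w t' j \<le> sum (w t') {1..m}" using that wpos by (intro member_le_sum) (auto intro: less_imp_le)
      thus ?thesis using wsum that by simp
    qed
    have etat: "0 \<le> eta_t \<alpha> m \<eta> w t' \<and> eta_t \<alpha> m \<eta> w t' \<le> \<eta>" if t': "t' \<in> {1..T}" for t'
    proof
      have fin: "finite ((\<lambda>s. eta_cand \<alpha> m \<eta> w s) ` {1..t'})" by simp
      have ne: "(\<lambda>s. eta_cand \<alpha> m \<eta> w s) ` {1..t'} \<noteq> {}" using t' by simp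
      have c1: "eta_cand \<alpha> m \<eta> w 1 \<le> \<eta>"
      proof -
        have im: "(\<lambda>j. w 1 j) ` {1..m} = {1/real m}"
        proof -
          have "(\<lambda>j. w 1 j) ` {1..m} = (\<lambda>j. 1/real m) ` {1..m}" using w1 by (intro image_cong) auto
          also have "\<dots> = {1/real m}" using m1 by (intro image_constant) auto
          finally show ?thesis .
        qed
        have im2: "(\<lambda>j. w 1 j powr \<alpha>) ` {1..m} = {(1/real m) powr \<alpha>}"
        proof -
          have "(\<lambda>j. w 1 j powr \<alpha>) ` {1..m} = (\<lambda>j. (1/real m) powr \<alpha>) ` {1..m}" using w1 by (intro image_cong) auto
          also have "\<dots> = {(1/real m) powr \<alpha>}" using m1 by (intro image_constant) auto
          finally show ?thesis .
        qed
        have "1/real m \<le> (1/real m) powr \<alpha>"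
          using powr_mono'[of \<alpha> 1 "1/real m"] \<alpha> mpos m1 by simp
        thus ?thesis unfolding eta_cand_def im im2 by auto
      qed
      show "eta_t \<alpha> m \<eta> w t' \<le> \<eta>"
        unfolding eta_t_def using t' c1 by (intro order.trans[OF Min_le c1]) auto
      show "0 \<le> eta_t \<alpha> m \<eta> w t'"
        unfolding eta_t_def
      proof (rule Min.boundedI[OF fin ne])
        fix x assume "x \<in> (\<lambda>s. eta_cand \<alpha> m \<eta> w s) ` {1..t'}"
        then obtain s' where s': "s' \<in> {1..t'}" "x = eta_cand \<alpha> m \<eta> w s'" by blast
        have "0 \<le> Min ((\<lambda>i. w s' i) ` {1..m})"
          using m1 s' t' wpos by (intro Min.boundedI) (auto intro: less_imp_le)
        thus "0 \<le> x" using s' \<eta>nn by (simp add: eta_cand_def)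
      qed
    qed
    define a where "a t' j = eta_t \<alpha> m \<eta> w t' * loss_grad m n (P t') (J t') (w t') j" for t' j
    have abnd: "-E / w t' j \<le> a t' j \<and> a t' j \<le> E" if t': "t' \<in> {1..T}" and j: "j \<in> {1..m}" for t' j
    proof -
      let ?g = "loss_grad m n (P t') (J t') (w t') j"
      let ?e = "eta_t \<alpha> m \<eta> w t'"
      have g: "-\<gamma> / w t' j \<le> ?g" "?g \<le> \<gamma>" using sg t' j by (auto simp: small_gradient_def \<gamma>_def)
      have e: "0 \<le> ?e" "?e \<le> \<eta>" using etat[OF t'] by auto
      have wp: "0 < w t' j" using wpos t' j by auto
      have "?e * ?g \<le> ?e * \<gamma>" using g e by (intro mult_left_mono) auto
      also have "\<dots> \<le> \<eta> * \<gamma>" using e \<gamma>nn by (intro mult_right_mono) auto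
      finally have up: "a t' j \<le> E" using Eeq by (simp add: a_def)
      have "?e * (-\<gamma> / w t' j) \<le> ?e * ?g" using g e by (intro mult_left_mono) auto
      moreover have "\<eta> * (-\<gamma> / w t' j) \<le> ?e * (-\<gamma> / w t' j)"
        using e \<gamma>nn wp by (intro mult_right_mono_neg) auto
      moreover have "\<eta> * (-\<gamma> / w t' j) = -E / w t' j" using Eeq by (simp add: field_simps)
      ultimately have "-E / w t' j \<le> ?e * ?g" by linarith
      hence "-E / w t' j \<le> a t' j" by (simp add: a_def)
      thus ?thesis using up by simp
    qed
    have updc: "\<exists>c. \<forall>j\<in>{1..m}. w (Suc t') j powr (\<alpha>-1) = w t' j powr (\<alpha>-1) + (a t' j - c)"
      if t': "t' \<in> {1..T}" for t'
    proof -
      obtain c where c: "\<forall>j\<in>{1..m}. - (w (Suc t') j powr (\<alpha> - 1)) =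
             - (w t' j powr (\<alpha> - 1)) - eta_t \<alpha> m \<eta> w t' * loss_grad m n (P t') (J t') (w t') j + c"
        using R4[OF t'] by blast
      show ?thesis
        by (rule exI[of _ c]) (use c in \<open>auto simp: a_def\<close>)
    qed
    have stepfacts: "\<forall>j\<in>{1..m}. -32 * w t' j powr (1-\<alpha>) * E \<le> w t' j - w (Suc t') j
        \<and> w t' j - w (Suc t') j \<le> 2 * w t' j powr (2-\<alpha>) * (real m+1) * E
        \<and> w (Suc t') j powr (\<alpha>-1) \<le> w t' j powr (\<alpha>-1) + (1 + K)*E"
      if t': "t' \<in> {1..T}" and big: "\<forall>j\<in>{1..m}. 4*E \<le> w t' j powr \<alpha>" for t'
    proof -
      obtain c where c: "\<forall>j\<in>{1..m}. w (Suc t') j powr (\<alpha>-1) = w t' j powr (\<alpha>-1) + (a t' j - c)"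
        using updc[OF t'] by blast
      have st1: "t' \<in> {1..Suc T}" "Suc t' \<in> {1..Suc T}" using t' by auto
      have cb: "-(real m + (1-2*\<alpha>))*E \<le> c \<and> c \<le> E"
        by (rule step_c[OF \<alpha> m1, of "w t'" "w (Suc t')" "a t'" c E])
           (use wpos st1 wsum c abnd t' big Epos Esm1 Esm2 in \<open>auto simp: K_def\<close>)
      show ?thesis
      proof
        fix j assume j: "j \<in> {1..m}"
        have wj: "0 < w t' j" "w t' j \<le> 1" "0 < w (Suc t') j" using wpos wle1 st1 j by auto
        note si = step_i[OF \<alpha> wj(1,2,3), of "a t' j" c E m]
        show "-32 * w t' j powr (1-\<alpha>) * E \<le> w t' j - w (Suc t') j
        \<and> w t' j - w (Suc t') j \<le> 2 * w t' j powr (2-\<alpha>) * (real m+1) * E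
        \<and> w (Suc t') j powr (\<alpha>-1) \<le> w t' j powr (\<alpha>-1) + (1 + K)*E"
          using si c j abnd[OF t' j] big Epos cb by (auto simp: K_def add.commute)
      qed
    qed
    define L where "L = 1 / (10 * sqrt (real m)) * real T powr (1 / (2 * (\<alpha> - 1)))"
    have bigfacts: "L \<le> w t' j \<and> 4*E \<le> w t' j powr \<alpha>"
      if t': "t' \<in> {1..T}" and j: "j \<in> {1..m}"
        and u: "w t' j powr (\<alpha>-1) \<le> real m powr (1-\<alpha>) + real T * (1+K) * E" for t' j
    proof -
      have wj: "0 < w t' j" "w t' j \<le> 1" using wpos wle1 t' j by auto
      have TT: "1 \<le> real T" using T3 by simp
      have H2': "4 * sqrt (10 * sqrt (real m)) \<le> real T powr (1/2 + 1/(4*(\<alpha>-1)))"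
        using H2 by (simp add: C_def q_def)
      note ar = arith_T[OF \<alpha> m1 TT H1 H2' wj u[unfolded K_def E_def]]
      show ?thesis using ar by (simp add: L_def E_def)
    qed
    have inv: "\<forall>j\<in>{1..m}. w t' j powr (\<alpha>-1) \<le> real m powr (1-\<alpha>) + (real t' - 1) * (1+K) * E"
      if "t' \<in> {1..T}" for t'
      using that
    proof (induction t')
      case 0 thus ?case by simp
    next
      case (Suc t')
      show ?case
      proof (cases "t' = 0")
        case True
        show ?thesis
        proof
          fix j assume j: "j \<in> {1..m}"
          have "w (Suc t') j powr (\<alpha>-1) = (1/real m) powr (\<alpha>-1)" using True w1 j by simp
          also have "\<dots> = real m powr (1-\<alpha>)"
            using mpos by (simp add: powr_divide powr_minus_divide[symmetric])
          finally show "w (Suc t') j powr (\<alpha>-1) \<le> real m powr (1-\<alpha>) + (real (Suc t') - 1) * (1+K) * E"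
            using True by simp
        qed
      next
        case False
        have t': "t' \<in> {1..T}" using False Suc.prems by auto
        have IH: "\<forall>j\<in>{1..m}. w t' j powr (\<alpha>-1) \<le> real m powr (1-\<alpha>) + (real t' - 1) * (1+K) * E"
          using Suc.IH t' by blast
        have KE: "0 \<le> (1+K) * E" using Kpos Epos by simp
        have big: "\<forall>j\<in>{1..m}. 4*E \<le> w t' j powr \<alpha>"
        proof
          fix j assume j: "j \<in> {1..m}"
          have "(real t' - 1) * (1+K) * E \<le> real T * ((1+K) * E)"
            using t' KE by (simp add: mult.assoc mult_right_mono)
          moreover have "w t' j powr (\<alpha>-1) \<le> real m powr (1-\<alpha>) + (real t' - 1) * (1+K) * E"
            using IH j by blast
          ultimately have "w t' j powr (\<alpha>-1) \<le> real m powr (1-\<alpha>) + real T * (1+K) * E"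
            by (simp add: mult.assoc)
          thus "4*E \<le> w t' j powr \<alpha>" using bigfacts[OF t' j] by simp
        qed
        have sf: "\<forall>j\<in>{1..m}. w (Suc t') j powr (\<alpha>-1) \<le> w t' j powr (\<alpha>-1) + (1 + K)*E"
          using stepfacts[OF t' big] by blast
        show ?thesis
        proof
          fix j assume j: "j \<in> {1..m}"
          have "w (Suc t') j powr (\<alpha>-1) \<le> real m powr (1-\<alpha>) + (real t' - 1) * (1+K) * E + (1 + K)*E"
            using sf IH j by fastforce
          thus "w (Suc t') j powr (\<alpha>-1) \<le> real m powr (1-\<alpha>) + (real (Suc t') - 1) * (1+K) * E"
            by (simp add: algebra_simps)
        qed
      qed
    qed
    have KE: "0 \<le> (1+K) * E" using Kpos Epos by simp
    have bigt: "\<forall>j\<in>{1..m}. L \<le> w t j \<and> 4*E \<le> w t j powr \<alpha>"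
    proof
      fix j assume j: "j \<in> {1..m}"
      have "(real t - 1) * (1+K) * E \<le> real T * ((1+K) * E)"
        using t KE by (simp add: mult.assoc mult_right_mono)
      moreover have "w t j powr (\<alpha>-1) \<le> real m powr (1-\<alpha>) + (real t - 1) * (1+K) * E"
        using inv[OF t] j by blast
      ultimately have "w t j powr (\<alpha>-1) \<le> real m powr (1-\<alpha>) + real T * (1+K) * E"
        by (simp add: mult.assoc)
      thus "L \<le> w t j \<and> 4*E \<le> w t j powr \<alpha>" using bigfacts[OF t j] by simp
    qed
    have sf: "-32 * w t i powr (1-\<alpha>) * E \<le> w t i - w (Suc t) i
        \<and> w t i - w (Suc t) i \<le> 2 * w t i powr (2-\<alpha>) * (real m+1) * E"
      using stepfacts[OF t] bigt i by blast
    have e4: "4 * alg_eta \<alpha> m n T * alg_gamma n T = 4 * E" using Eeq by (simp add: \<eta>_def \<gamma>_def)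
    have e32: "- 32 * w t i powr (1 - \<alpha>) * alg_eta \<alpha> m n T * alg_gamma n T = -32 * w t i powr (1-\<alpha>) * E"
      using Eeq by (simp add: \<eta>_def \<gamma>_def)
    have e2: "2 * w t i powr (2 - \<alpha>) * (real m + 1) * alg_eta \<alpha> m n T * alg_gamma n T
       = 2 * w t i powr (2-\<alpha>) * (real m+1) * E"
      using Eeq by (simp add: \<eta>_def \<gamma>_def)
    show "w t i powr \<alpha> \<ge> 4 * alg_eta \<alpha> m n T * alg_gamma n T \<and>
       w t i \<ge> 1 / (10 * sqrt (real m)) * real T powr (1 / (2 * (\<alpha> - 1))) \<and>
       - 32 * w t i powr (1 - \<alpha>) * alg_eta \<alpha> m n T * alg_gamma n T \<le> w t i - w (Suc t) i \<and>
       w t i - w (Suc t) i \<le> 2 * w t i powr (2 - \<alpha>) * (real m + 1) * alg_eta \<alpha> m n T * alg_gamma n T"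
      unfolding e4 e32 e2 using sf bigt i by (simp add: L_def)
  qed
qed


end
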